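(* Let $N$ be a natural number. For any two sets $A,B\subseteq{}^N2$, we have $A\subseteq B$ if and only if $\Delta(B)\preceq\Delta(A)$.
   Context: $N=\{0,\ldots,N-1\}$; ${}^N2$ is the set of all functions $N\to\{0,1\}$, and ${}^{\underline N}2$ is the set of all partial functions $\sigma$ with $\mathrm{dom}(\sigma)\subseteq N$ and values in $\{0,1\}$ (functions are sets of ordered pairs; the empty function is included). For $\sigma\in{}^{\underline N}2$, $[\sigma]=\{f\in{}^N2:\sigma\subseteq f\}$. For $A\subseteq{}^N2$, $\Delta(A)=\{\sigma\in{}^{\underline N}2: [\sigma]\cap A=\emptyset \text{ and } [\rho]\cap A\neq\emptyset \text{ for all } \rho\subsetneq\sigma\}$. For $\delta_1,\delta_2\subseteq{}^{\underline N}2$, $\delta_1\preceq\delta_2$ means that for every $\sigma\in\delta_1$ there is $\rho\in\delta_2$ with $\rho\subseteq\sigma$. *)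

theory Defs
  imports Main
begin

text \<open>Functions are modelled as maps (partial functions) nat to bool; bool plays the role of 2.
  Inclusion of functions as sets of ordered pairs is map_le.\<close>

definition total_fns :: "nat \<Rightarrow> (nat \<rightharpoonup> bool) set" where
  "total_fns N = {f. dom f = {..<N}}"

definition partial_fns :: "nat \<Rightarrow> (nat \<rightharpoonup> bool) set" where
  "partial_fns N = {s. dom s \<subseteq> {..<N}}"

definition cyl :: "nat \<Rightarrow> (nat \<rightharpoonup> bool) \<Rightarrow> (nat \<rightharpoonup> bool) set" where
  "cyl N s = {f \<in> total_fns N. s \<subseteq>\<^sub>m f}"

definition Delta :: "nat \<Rightarrow> (nat \<rightharpoonup> bool) set \<Rightarrow> (nat \<rightharpoonup> bool) set" where
  "Delta N A = {s \<in> partial_fns N. cyl N s \<inter> A = {} \<and>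
      (\<forall>r. r \<subseteq>\<^sub>m s \<and> r \<noteq> s \<longrightarrow> cyl N r \<inter> A \<noteq> {})}"

definition preceq :: "(nat \<rightharpoonup> bool) set \<Rightarrow> (nat \<rightharpoonup> bool) set \<Rightarrow> bool" where
  "preceq d1 d2 \<longleftrightarrow> (\<forall>s\<in>d1. \<exists>r\<in>d2. r \<subseteq>\<^sub>m s)"

end

theory Submission
  imports Defs
begin

lemma map_le_dom_eq:
  assumes "r \<subseteq>\<^sub>m s" "dom s \<subseteq> dom r"
  shows "r = s"
proof
  fix x show "r x = s x"
  proof (cases "x \<in> dom r")
    case True then show ?thesis using assms(1) unfolding map_le_def by blast
  next
    case False then have "s x = None" using assms(2) by blast
    then show ?thesis using False by auto
  qed
qed

lemma map_le_neq_dom: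
  assumes "r \<subseteq>\<^sub>m s" "r \<noteq> s"
  shows "dom r \<subset> dom s"
proof -
  have "dom r \<subseteq> dom s" using assms(1) by (rule map_le_implies_dom_le)
  moreover have "dom r \<noteq> dom s"
  proof
    assume "dom r = dom s"
    then have "r = s" using assms(1) map_le_dom_eq by blast
    then show False using assms(2) by simp
  qed
  ultimately show ?thesis by blast
qed

lemma exists_Delta:
  "s \<in> partial_fns N \<Longrightarrow> cyl N s \<inter> X = {} \<Longrightarrow> \<exists>r. r \<subseteq>\<^sub>m s \<and> r \<in> Delta N X"
proof (induction "card (dom s)" arbitrary: s rule: less_induct)
  case less
  show ?case
  proof (cases "s \<in> Delta N X")
    case True
    then show ?thesis by (auto intro: map_le_refl)
  next
    case False
    then obtain r where r: "r \<subseteq>\<^sub>m s" "r \<noteq> s" "cyl N r \<inter> X = {}"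
      using less.prems unfolding Delta_def by blast
    have fin: "finite (dom s)" using less.prems(1) unfolding partial_fns_def
      using finite_subset by auto
    have sub: "dom r \<subset> dom s" using map_le_neq_dom r by blast
    then have "card (dom r) < card (dom s)" using fin by (simp add: psubset_card_mono)
    moreover have "r \<in> partial_fns N" using sub less.prems(1) unfolding partial_fns_def by auto
    ultimately obtain r' where "r' \<subseteq>\<^sub>m r" "r' \<in> Delta N X" using less.hyps r(3) by blast
    then show ?thesis using r(1) map_le_trans by blast
  qed
qed

theorem theorem6p9:
  fixes N :: nat and A B :: "(nat \<rightharpoonup> bool) set"
  assumes "A \<subseteq> total_fns N" and "B \<subseteq> total_fns N"
  shows "A \<subseteq> B \<longleftrightarrow> preceq (Delta N B) (Delta N A)"
proof
  assume AB: "A \<subseteq> B"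
  show "preceq (Delta N B) (Delta N A)"
    unfolding preceq_def
  proof
    fix s assume s: "s \<in> Delta N B"
    then have "s \<in> partial_fns N" "cyl N s \<inter> A = {}" using AB unfolding Delta_def by auto
    then show "\<exists>r\<in>Delta N A. r \<subseteq>\<^sub>m s" using exists_Delta by blast
  qed
next
  assume P: "preceq (Delta N B) (Delta N A)"
  show "A \<subseteq> B"
  proof
    fix f assume fA: "f \<in> A"
    show "f \<in> B"
    proof (rule ccontr)
      assume fB: "f \<notin> B"
      have ft: "f \<in> total_fns N" using fA assms(1) by blast
      have cf: "cyl N f = {f}"
      proof
        show "cyl N f \<subseteq> {f}"
        proof
          fix g assume "g \<in> cyl N f"
          then have "g \<in> total_fns N" "f \<subseteq>\<^sub>m g" unfolding cyl_def by auto
          then have "g = f" using ft map_le_dom_eq[of f g] unfolding total_fns_def by auto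
          then show "g \<in> {f}" by simp
        qed
        show "{f} \<subseteq> cyl N f" using ft unfolding cyl_def by (auto intro: map_le_refl)
      qed
      have "f \<in> partial_fns N" using ft unfolding total_fns_def partial_fns_def by auto
      moreover have "cyl N f \<inter> B = {}" using cf fB by auto
      ultimately obtain s where s: "s \<subseteq>\<^sub>m f" "s \<in> Delta N B" using exists_Delta by blast
      then obtain r where r: "r \<in> Delta N A" "r \<subseteq>\<^sub>m s" using P unfolding preceq_def by blast
      then have "f \<in> cyl N r" using s(1) ft map_le_trans unfolding cyl_def by blast
      then show False using r(1) fA unfolding Delta_def by blast
    qed
  qed
qed

end
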